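(* Impose (A1)–(A6), (A8) and the reverse mean dominance assumption (A9'), and fix $x\in\mathcal X$, $u\in[0,1]$. Write $R(x,u)=\frac{m_1^Y(x,u)}{m_1^S(x,u)}-\frac{m_0^Y(x,u)}{m_0^S(x,u)}$. Then $\Delta^{OO}_{Y^*}(x,u)\le R(x,u)$ in each case below, and moreover: (i) under (A7.1), $\Delta^{OO}_{Y^*}(x,u)\ge\underline y^*-\frac{m_0^Y(x,u)}{m_0^S(x,u)}$; (ii) under (A7.2), $\Delta^{OO}_{Y^*}(x,u)\ge\frac{m_1^Y(x,u)-\overline y^*\Delta_S(x,u)}{m_0^S(x,u)}-\frac{m_0^Y(x,u)}{m_0^S(x,u)}$; (iii) under (A7.3) (sub-case (a) or (b)), $\Delta^{OO}_{Y^*}(x,u)\ge\max\left\{\frac{m_1^Y(x,u)-\overline y^*\Delta_S(x,u)}{m_0^S(x,u)},\underline y^*\right\}-\frac{m_0^Y(x,u)}{m_0^S(x,u)}$; (iv) if $\mathcal Y^*=\mathbb R$, then $-\infty\le\Delta^{OO}_{Y^*}(x,u)\le R(x,u)$.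
   Context: Standing setup. On a common probability space: $X$ (covariates, support $\mathcal X$), $Z$ (instrument, support $\mathcal Z$), $W=(X,Z)$; latent real random variables $U,V$, jointly continuously distributed conditional on $X$, with $U\mid X$ and $V\mid X$ each Uniform$[0,1]$ (their joint dependence unrestricted); real potential outcomes of interest $Y_0^*,Y_1^*$. Given functions $P:\mathcal X\times\mathcal Z\to[0,1]$ and $Q:\{0,1\}\times\mathcal X\to[0,1]$, define the treatment $D=\mathbf 1\{P(W)\ge U\}$, potential selection indicators $S_d=\mathbf 1\{Q(d,X)\ge V\}$ ($d\in\{0,1\}$), selection indicator $S=DS_1+(1-D)S_0$, potential observable outcomes $Y_d=S_dY_d^*$ and observable outcome $Y=DY_1+(1-D)Y_0$. For $x\in\mathcal X$, $u\in[0,1]$, $d\in\{0,1\}$: $m_d^Y(x,u)=\mathbb E[Y_d\mid X=x,U=u]$, $m_d^S(x,u)=\mathbb E[S_d\mid X=x,U=u]$, $\Delta_S(x,u)=m_1^S(x,u)-m_0^S(x,u)$, and $\Delta^{OO}_{Y^*}(x,u)=\mathbb E[Y_1^*-Y_0^*\mid X=x,U=u,S_0=1,S_1=1]$. Ratios appearing are assumed well defined. Assumptions: (A1) $Z$ is independent of $(U,V,Y_0^*,Y_1^* )$ conditional on $X$; (A2) the distribution of $P(W)$ given $X$ is nondegenerate; (A3) $\mathbb E|Y_d^*|<\infty$ and $\mathbb E[(Y_d^* )^2]<\infty$; (A4) $0<\mathbb P[D=1\mid X]<1$; (A5) $X$ is invariant to counterfactual manipulation of treatment; (A6) $Y_0^*,Y_1^*$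 have a common support $\mathcal Y^*\subseteq\mathbb R$; $\underline y^*=\inf\mathcal Y^*$, $\overline y^*=\sup\mathcal Y^*$ (possibly infinite), known. Support cases: (A7.1) $\underline y^*>-\infty$, $\overline y^*=+\infty$, $\mathcal Y^*$ an interval; (A7.2) $\underline y^*=-\infty$, $\overline y^*<\infty$, $\mathcal Y^*$ an interval; (A7.3) both finite and either (a) $\mathcal Y^*$ an interval or (b) $\underline y^*,\overline y^*\in\mathcal Y^*$. (A8) $Q(1,x)>Q(0,x)>0$ for all $x\in\mathcal X$. (A9') (reverse mean dominance) for all $x,u$: $\mathbb E[Y_1^*\mid X=x,U=u,S_0=1,S_1=1]\le\mathbb E[Y_1^*\mid X=x,U=u,S_0=0,S_1=1]$. *)

theory Defs
  imports "HOL-Probability.Probability"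
begin

text \<open>
  For every covariate value x and every u, the measure
  kap x u is (a version of) the conditional distribution of the triple
  (V, Y0*, Y1*) given X = x, U = u.  A point t = (v, y0, y1) of its sample space
  has fst t = v, fst (snd t) = y0, snd (snd t) = y1.
  Treatment arms d are encoded as naturals 0 and 1.
\<close>

definition Ssel :: "(nat \<Rightarrow> 'x \<Rightarrow> real) \<Rightarrow> nat \<Rightarrow> 'x \<Rightarrow> real \<times> real \<times> real \<Rightarrow> bool" where
  "Ssel Q d x t \<longleftrightarrow> fst t \<le> Q d x"

definition Ystar :: "nat \<Rightarrow> real \<times> real \<times> real \<Rightarrow> real" where
  "Ystar d t = (if d = 1 then snd (snd t) else fst (snd t))"

definition mY :: "(nat \<Rightarrow> 'x \<Rightarrow> real) \<Rightarrow> ('x \<Rightarrow> real \<Rightarrow> (real \<times> real \<times> real) measure)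
    \<Rightarrow> nat \<Rightarrow> 'x \<Rightarrow> real \<Rightarrow> real" where
  "mY Q kap d x u = (\<integral>t. indicator {t. Ssel Q d x t} t * Ystar d t \<partial>(kap x u))"

definition mS :: "(nat \<Rightarrow> 'x \<Rightarrow> real) \<Rightarrow> ('x \<Rightarrow> real \<Rightarrow> (real \<times> real \<times> real) measure)
    \<Rightarrow> nat \<Rightarrow> 'x \<Rightarrow> real \<Rightarrow> real" where
  "mS Q kap d x u = measure (kap x u) {t. Ssel Q d x t}"

definition DeltaS :: "(nat \<Rightarrow> 'x \<Rightarrow> real) \<Rightarrow> ('x \<Rightarrow> real \<Rightarrow> (real \<times> real \<times> real) measure)
    \<Rightarrow> 'x \<Rightarrow> real \<Rightarrow> real" where
  "DeltaS Q kap x u = mS Q kap 1 x u - mS Q kap 0 x u"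

definition cond_mean :: "'a measure \<Rightarrow> 'a set \<Rightarrow> ('a \<Rightarrow> real) \<Rightarrow> real" where
  "cond_mean N E f = (\<integral>t. indicator E t * f t \<partial>N) / measure N E"

definition AO :: "(nat \<Rightarrow> 'x \<Rightarrow> real) \<Rightarrow> 'x \<Rightarrow> (real \<times> real \<times> real) set" where
  "AO Q x = {t. Ssel Q 0 x t \<and> Ssel Q 1 x t}"

definition NO :: "(nat \<Rightarrow> 'x \<Rightarrow> real) \<Rightarrow> 'x \<Rightarrow> (real \<times> real \<times> real) set" where
  "NO Q x = {t. \<not> Ssel Q 0 x t \<and> Ssel Q 1 x t}"

definition DeltaOO :: "(nat \<Rightarrow> 'x \<Rightarrow> real) \<Rightarrow> ('x \<Rightarrow> real \<Rightarrow> (real \<times> real \<times> real) measure)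
    \<Rightarrow> 'x \<Rightarrow> real \<Rightarrow> real" where
  "DeltaOO Q kap x u = cond_mean (kap x u) (AO Q x) (\<lambda>t. Ystar 1 t - Ystar 0 t)"

definition ylow :: "real set \<Rightarrow> ereal" where "ylow Ys = Inf (ereal ` Ys)"
definition yhigh :: "real set \<Rightarrow> ereal" where "yhigh Ys = Sup (ereal ` Ys)"

definition sel_model ::
  "'a measure \<Rightarrow> 'x measure \<Rightarrow> ('a \<Rightarrow> 'x) \<Rightarrow> ('a \<Rightarrow> real) \<Rightarrow> ('a \<Rightarrow> real)
   \<Rightarrow> ('a \<Rightarrow> real) \<Rightarrow> ('a \<Rightarrow> real) \<Rightarrow> real set
   \<Rightarrow> ('x \<Rightarrow> real \<Rightarrow> (real \<times> real \<times> real) measure) \<Rightarrow> bool" where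
  "sel_model M MX X U V Y0s Y1s Ys kap \<longleftrightarrow>
     prob_space M \<and>
     X \<in> measurable M MX \<and>
     U \<in> borel_measurable M \<and> V \<in> borel_measurable M \<and>
     Y0s \<in> borel_measurable M \<and> Y1s \<in> borel_measurable M \<and>
     (\<forall>\<omega>\<in>space M. U \<omega> \<in> {0..1} \<and> V \<omega> \<in> {0..1} \<and> Y0s \<omega> \<in> Ys \<and> Y1s \<omega> \<in> Ys) \<and>
     (\<forall>A\<in>sets MX. \<forall>s\<in>{0..1}.
        measure M {\<omega>\<in>space M. X \<omega> \<in> A \<and> U \<omega> \<le> s} = s * measure M {\<omega>\<in>space M. X \<omega> \<in> A} \<and>
        measure M {\<omega>\<in>space M. X \<omega> \<in> A \<and> V \<omega> \<le> s} = s * measure M {\<omega>\<in>space M. X \<omega> \<in> A}) \<and>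
     integrable M Y0s \<and> integrable M Y1s \<and>
     integrable M (\<lambda>\<omega>. (Y0s \<omega>)\<^sup>2) \<and> integrable M (\<lambda>\<omega>. (Y1s \<omega>)\<^sup>2) \<and>
     (\<forall>x u. prob_space (kap x u) \<and> sets (kap x u) = sets borel \<and>
        (AE t in kap x u. fst (snd t) \<in> Ys \<and> snd (snd t) \<in> Ys) \<and>
        integrable (kap x u) (Ystar 0) \<and> integrable (kap x u) (Ystar 1)) \<and>
     (\<forall>A\<in>sets (MX \<Otimes>\<^sub>M borel). \<forall>B\<in>sets (borel :: (real \<times> real \<times> real) measure).
        measure M {\<omega>\<in>space M. (X \<omega>, U \<omega>) \<in> A \<and> (V \<omega>, Y0s \<omega>, Y1s \<omega>) \<in> B}
        = (\<integral>\<omega>. indicator A (X \<omega>, U \<omega>) * measure (kap (X \<omega>) (U \<omega>)) B \<partial>M))"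

end

theory Submission
  imports Defs
begin

theorem corollaryF1:
  fixes M :: "'a measure" and MX :: "'x measure" and X :: "'a \<Rightarrow> 'x"
    and U V Y0s Y1s :: "'a \<Rightarrow> real" and Ys :: "real set"
    and kap :: "'x \<Rightarrow> real \<Rightarrow> (real \<times> real \<times> real) measure"
    and Q :: "nat \<Rightarrow> 'x \<Rightarrow> real" and x :: 'x and u :: real
  assumes model: "sel_model M MX X U V Y0s Y1s Ys kap"
    and A8: "\<forall>x'\<in>X ` space M. Q 1 x' > Q 0 x' \<and> Q 0 x' > 0"
    and A9': "\<forall>x'\<in>X ` space M. \<forall>u'\<in>{0..1}. measure (kap x' u') (NO Q x') > 0 \<longrightarrow>
               cond_mean (kap x' u') (AO Q x') (Ystar 1) \<le> cond_mean (kap x' u') (NO Q x') (Ystar 1)"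
    and x: "x \<in> X ` space M" and u: "u \<in> {0..1}"
    and wd0: "mS Q kap 0 x u > 0" and wd1: "mS Q kap 1 x u > 0"
  defines "R \<equiv> mY Q kap 1 x u / mS Q kap 1 x u - mY Q kap 0 x u / mS Q kap 0 x u"
  shows "DeltaOO Q kap x u \<le> R
    \<and> ((ylow Ys > -\<infinity> \<and> yhigh Ys = \<infinity> \<and> is_interval Ys) \<longrightarrow>
         DeltaOO Q kap x u \<ge> real_of_ereal (ylow Ys) - mY Q kap 0 x u / mS Q kap 0 x u)
    \<and> ((ylow Ys = -\<infinity> \<and> yhigh Ys < \<infinity> \<and> is_interval Ys) \<longrightarrow>
         DeltaOO Q kap x u \<ge> (mY Q kap 1 x u - real_of_ereal (yhigh Ys) * DeltaS Q kap x u) / mS Q kap 0 x u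
                              - mY Q kap 0 x u / mS Q kap 0 x u)
    \<and> ((ylow Ys > -\<infinity> \<and> yhigh Ys < \<infinity> \<and>
        (is_interval Ys \<or> (real_of_ereal (ylow Ys) \<in> Ys \<and> real_of_ereal (yhigh Ys) \<in> Ys))) \<longrightarrow>
         DeltaOO Q kap x u \<ge> max ((mY Q kap 1 x u - real_of_ereal (yhigh Ys) * DeltaS Q kap x u) / mS Q kap 0 x u)
                                   (real_of_ereal (ylow Ys))
                              - mY Q kap 0 x u / mS Q kap 0 x u)
    \<and> (Ys = UNIV \<longrightarrow> -\<infinity> \<le> ereal (DeltaOO Q kap x u) \<and> DeltaOO Q kap x u \<le> R)"
proof -
  have mod: "prob_space (kap x u)" "sets (kap x u) = sets borel"
    "AE t in kap x u. fst (snd t) \<in> Ys \<and> snd (snd t) \<in> Ys"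
    "integrable (kap x u) (Ystar 0)" "integrable (kap x u) (Ystar 1)"
    using model unfolding sel_model_def by auto
  define N where "N = kap x u"
  interpret P: prob_space N using mod(1) N_def by simp
  have sN: "sets N = sets borel" using mod N_def by simp
  have spN: "space N = UNIV" using sets_eq_imp_space_eq[OF sN] by simp
  have AEY: "AE t in N. fst (snd t) \<in> Ys \<and> snd (snd t) \<in> Ys" using mod(3) unfolding N_def .
  have iY0: "integrable N (Ystar 0)" and iY1: "integrable N (Ystar 1)" using mod(4,5) unfolding N_def by simp_all
  have Ysne: "Ys \<noteq> {}"
  proof
    assume "Ys = {}"
    then have "AE t in N. False" using AEY by simp
    then show False using P.AE_False by simp
  qed
  have q: "Q 0 x < Q 1 x" using A8 x by auto
  define S0 where "S0 = {t::real\<times>real\<times>real. fst t \<le> Q 0 x}"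
  define S1 where "S1 = {t::real\<times>real\<times>real. fst t \<le> Q 1 x}"
  have meas: "\<And>c. {t::real\<times>real\<times>real. fst t \<le> c} \<in> sets N"
  proof -
    fix c
    have "{t::real\<times>real\<times>real. fst t \<le> c} = {t \<in> space borel. fst t \<le> c}" by simp
    also have "\<dots> \<in> sets borel" 
      by (simp add: borel_closed closed_Collect_le continuous_on_fst continuous_on_id continuous_on_const)
    finally show "{t::real\<times>real\<times>real. fst t \<le> c} \<in> sets N" using sN by simp
  qed
  have S0m: "S0 \<in> sets N" and S1m: "S1 \<in> sets N" using meas S0_def S1_def by auto
  have NOm: "S1 - S0 \<in> sets N" using S0m S1m by auto
  have sub: "S0 \<subseteq> S1" using q S0_def S1_def by auto
  have AOe: "AO Q x = S0" unfolding AO_def S0_def Ssel_def using q by auto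
  have NOe: "NO Q x = S1 - S0" unfolding NO_def S0_def S1_def Ssel_def by auto
  have Se0: "{t. Ssel Q 0 x t} = S0" unfolding S0_def Ssel_def by auto
  have Se1: "{t. Ssel Q 1 x t} = S1" unfolding S1_def Ssel_def by auto
  define p0 where "p0 = measure N S0"
  define p1 where "p1 = measure N S1"
  define pN where "pN = measure N (S1 - S0)"
  have pNe: "pN = p1 - p0" unfolding pN_def p1_def p0_def
    using P.finite_measure_Diff[OF S1m S0m] sub by auto
  have pN0: "pN \<ge> 0" unfolding pN_def by simp
  have p0pos: "p0 > 0" using wd0 unfolding mS_def p0_def N_def Se0 by simp
  have intS: "\<And>A d. A \<in> sets N \<Longrightarrow> integrable N (\<lambda>t. indicator A t * Ystar d t)"
  proof -
    fix A d assume A: "A \<in> sets N"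
    have "integrable N (Ystar d)" using iY0 iY1 unfolding Ystar_def by (cases "d = 1") auto
    from integrable_mult_indicator[OF A this]
    show "integrable N (\<lambda>t. indicator A t * Ystar d t)" by simp
  qed
  define I0 where "I0 = (\<integral>t. indicator S0 t * Ystar 1 t \<partial>N)"
  define IN where "IN = (\<integral>t. indicator (S1 - S0) t * Ystar 1 t \<partial>N)"
  define J0 where "J0 = (\<integral>t. indicator S0 t * Ystar 0 t \<partial>N)"
  have ind: "\<And>t. indicator S1 t = (indicator S0 t + indicator (S1 - S0) t :: real)"
    using sub by (auto simp: indicator_def)
  have mY1: "mY Q kap 1 x u = I0 + IN"
  proof -
    have "mY Q kap 1 x u = (\<integral>t. indicator S0 t * Ystar 1 t + indicator (S1 - S0) t * Ystar 1 t \<partial>N)"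
      unfolding mY_def Se1 N_def[symmetric] ind by (simp add: distrib_right)
    also have "\<dots> = I0 + IN" unfolding I0_def IN_def
      by (rule Bochner_Integration.integral_add[OF intS[OF S0m] intS[OF NOm]])
    finally show ?thesis .
  qed
  have mY0: "mY Q kap 0 x u = J0" unfolding mY_def Se0 N_def[symmetric] J0_def by simp
  have mS0: "mS Q kap 0 x u = p0" unfolding mS_def Se0 N_def[symmetric] p0_def by simp
  have mS1: "mS Q kap 1 x u = p1" unfolding mS_def Se1 N_def[symmetric] p1_def by simp
  have DS: "DeltaS Q kap x u = pN" unfolding DeltaS_def mS0 mS1 pNe by simp
  have DOO: "DeltaOO Q kap x u = I0 / p0 - J0 / p0"
  proof -
    have "(\<integral>t. indicator S0 t * (Ystar 1 t - Ystar 0 t) \<partial>N)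
        = (\<integral>t. indicator S0 t * Ystar 1 t - indicator S0 t * Ystar 0 t \<partial>N)"
      by (simp add: right_diff_distrib)
    also have "\<dots> = I0 - J0" unfolding I0_def J0_def
      by (rule Bochner_Integration.integral_diff[OF intS[OF S0m] intS[OF S0m]])
    finally show ?thesis unfolding DeltaOO_def cond_mean_def AOe N_def[symmetric] p0_def
      by (simp add: diff_divide_distrib)
  qed
  have upper: "DeltaOO Q kap x u \<le> R"
  proof (cases "pN > 0")
    case True
    have "cond_mean N S0 (Ystar 1) \<le> cond_mean N (S1 - S0) (Ystar 1)"
    proof -
      have "measure (kap x u) (NO Q x) > 0" using True unfolding pN_def N_def NOe .
      then have "cond_mean (kap x u) (AO Q x) (Ystar 1) \<le> cond_mean (kap x u) (NO Q x) (Ystar 1)"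
        using A9' x u by blast
      then show ?thesis unfolding N_def AOe NOe .
    qed
    then have le: "I0 / p0 \<le> IN / pN" unfolding cond_mean_def I0_def IN_def p0_def pN_def .
    have "I0 / p0 \<le> (I0 + IN) / (p0 + pN)"
      using le p0pos True by (simp add: field_simps)
    then show ?thesis unfolding R_def DOO mY1 mY0 mS0 mS1 using pNe by simp
  next
    case False
    then have z: "pN = 0" using pN0 by simp
    have "S1 - S0 \<in> null_sets N" using z NOm unfolding pN_def
      by (simp add: P.emeasure_eq_measure null_sets_def)
    then have "AE t in N. t \<notin> S1 - S0" by (rule AE_not_in)
    then have "AE t in N. indicator (S1 - S0) t * Ystar 1 t = (0::real)"
      by eventually_elim simp
    then have "IN = (\<integral>t. 0 \<partial>N)" unfolding IN_def
      by (intro integral_cong_AE) (use intS[OF NOm, of 1] in auto)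
    then have "IN = 0" by simp
    then show ?thesis unfolding R_def DOO mY1 mY0 mS0 mS1 using pNe z by simp
  qed
  have lowbound: "I0 \<ge> l * p0" if l: "\<And>y. y \<in> Ys \<Longrightarrow> l \<le> y" for l
  proof -
    have i1: "integrable N (\<lambda>t. indicator S0 t * l)"
      using integrable_mult_indicator[OF S0m P.integrable_const[of l]] by simp
    have ae: "AE t in N. indicator S0 t * l \<le> indicator S0 t * Ystar 1 t"
      using AEY by eventually_elim (use l in \<open>auto simp: Ystar_def indicator_def\<close>)
    have "(\<integral>t. indicator S0 t * l \<partial>N) \<le> I0" unfolding I0_def
      by (rule integral_mono_AE[OF i1 intS[OF S0m] ae])
    then show ?thesis unfolding p0_def using S0m by (simp add: mult.commute)
  qed
  have highbound: "IN \<le> h * pN" if h: "\<And>y. y \<in> Ys \<Longrightarrow> y \<le> h" for h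
  proof -
    have i1: "integrable N (\<lambda>t. indicator (S1 - S0) t * h)"
      using integrable_mult_indicator[OF NOm P.integrable_const[of h]] by simp
    have ae: "AE t in N. indicator (S1 - S0) t * Ystar 1 t \<le> indicator (S1 - S0) t * h"
      using AEY by eventually_elim (use h in \<open>auto simp: Ystar_def indicator_def\<close>)
    have "IN \<le> (\<integral>t. indicator (S1 - S0) t * h \<partial>N)" unfolding IN_def
      by (rule integral_mono_AE[OF intS[OF NOm] i1 ae])
    then show ?thesis unfolding pN_def using NOm by (simp add: mult.commute)
  qed
  have lowfin: "real_of_ereal (ylow Ys) \<le> y" if "ylow Ys > -\<infinity>" "y \<in> Ys" for y
  proof -
    have "ylow Ys \<le> ereal y" unfolding ylow_def using that(2) by (simp add: INF_lower)
    then show ?thesis using that(1) by (cases "ylow Ys") auto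
  qed
  have highfin: "y \<le> real_of_ereal (yhigh Ys)" if "yhigh Ys < \<infinity>" "y \<in> Ys" for y
  proof -
    have "ereal y \<le> yhigh Ys" unfolding yhigh_def using that(2) by (simp add: SUP_upper)
    then show ?thesis using that(1) by (cases "yhigh Ys") auto
  qed
  have L1: "DeltaOO Q kap x u \<ge> real_of_ereal (ylow Ys) - J0 / p0" if "ylow Ys > -\<infinity>"
  proof -
    have "I0 \<ge> real_of_ereal (ylow Ys) * p0" using lowbound lowfin[OF that] by blast
    then have "I0 / p0 \<ge> real_of_ereal (ylow Ys)" using p0pos by (simp add: field_simps)
    then show ?thesis unfolding DOO by simp
  qed
  have L2: "DeltaOO Q kap x u \<ge> (I0 + IN - real_of_ereal (yhigh Ys) * pN) / p0 - J0 / p0"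
    if "yhigh Ys < \<infinity>"
  proof -
    have "IN \<le> real_of_ereal (yhigh Ys) * pN" using highbound highfin[OF that] by blast
    then have "(I0 + IN - real_of_ereal (yhigh Ys) * pN) / p0 \<le> I0 / p0"
      using p0pos by (simp add: divide_right_mono)
    then show ?thesis unfolding DOO by simp
  qed
  show ?thesis
    using upper L1 L2 unfolding mY1 mY0 mS0 DS by auto
qed

end
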